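(* Let $\lambda=[4,2,2]$ and $\mu=[5,3]$. Then $\lambda\preccurlyeq_S\mu$, but $\lambda$ does not stably embed into $\mu$, i.e. there is no integral partition $\nu$ with $\lambda\times\nu\hookrightarrow\mu\times\nu$.
   Context: Partitions are finite nonincreasing sequences of positive integers. The product $\lambda\times\nu$ is the partition of all products $\lambda_i\nu_j$, reordered nonincreasingly. $\lambda=[\lambda_1,\ldots,\lambda_m]$ embeds into $\mu=[\mu_1,\ldots,\mu_n]$, written $\lambda\hookrightarrow\mu$, if there is a map $\varphi:\{1,\ldots,m\}\to\{1,\ldots,n\}$ with $\sum_{i\in\varphi^{-1}(j)}\lambda_i\le\mu_j$ for all $j$. $\lambda\preccurlyeq_S\mu$ means: for every $x\in\mathbb N$, $\sum_{\lambda_i\ge x}\lambda_i\le\sum_{\mu_j\ge x}\mu_j$. *)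

theory Defs
  imports Main
begin

definition is_partition :: "nat list \<Rightarrow> bool" where
  "is_partition xs \<longleftrightarrow> sorted_wrt (\<ge>) xs \<and> (\<forall>x\<in>set xs. 0 < x)"

definition pprod :: "nat list \<Rightarrow> nat list \<Rightarrow> nat list" where
  "pprod l n = rev (sort [a * b. a \<leftarrow> l, b \<leftarrow> n])"

definition embeds :: "nat list \<Rightarrow> nat list \<Rightarrow> bool" where
  "embeds l m \<longleftrightarrow> (\<exists>\<phi> :: nat \<Rightarrow> nat.
      (\<forall>i < length l. \<phi> i < length m) \<and>
      (\<forall>j < length m. (\<Sum>i \<in> {i. i < length l \<and> \<phi> i = j}. l ! i) \<le> m ! j))"

definition dom_S :: "nat list \<Rightarrow> nat list \<Rightarrow> bool" where
  "dom_S l m \<longleftrightarrow> (\<forall>x::nat. sum_list (filter (\<lambda>a. x \<le> a) l) \<le> sum_list (filter (\<lambda>a. x \<le> a) m))"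

end

theory Submission
  imports Defs "HOL-Computational_Algebra.Primes"
begin

lemma sum_pprod: "sum_list (pprod l n) = sum_list l * sum_list n"
proof -
  have "sum_list (pprod l n) = sum_list [a * b. a \<leftarrow> l, b \<leftarrow> n]"
    unfolding pprod_def
    by (metis mset_rev mset_sort sum_mset_sum_list)
  also have "\<dots> = sum_list l * sum_list n"
    by (induction l) (auto simp: sum_list_const_mult algebra_simps)
  finally show ?thesis .
qed

lemma set_pprod: "set (pprod l n) = {a * b | a b. a \<in> set l \<and> b \<in> set n}"
  unfolding pprod_def by auto

lemma embeds_sum_eq:
  assumes s: "sum_list l = sum_list m" and j: "j < length m"
    and A: "\<forall>i < length l. \<phi> i < length m"
    and B: "\<forall>j < length m. (\<Sum>i \<in> {i. i < length l \<and> \<phi> i = j}. l ! i) \<le> (m ! j :: nat)"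
  shows "(\<Sum>i \<in> {i. i < length l \<and> \<phi> i = j}. l ! i) = m ! j"
proof (rule ccontr)
  assume C: "(\<Sum>i \<in> {i. i < length l \<and> \<phi> i = j}. l ! i) \<noteq> m ! j"
  have g: "(\<Sum>j'\<in>{..<length m}. (\<Sum>i \<in> {i. i \<in> {..<length l} \<and> \<phi> i = j'}. l ! i)) = (\<Sum>i\<in>{..<length l}. l ! i)"
    by (rule sum.group) (use A in auto)
  have fe: "\<And>j'. {i. i \<in> {..<length l} \<and> \<phi> i = j'} = {i. i < length l \<and> \<phi> i = j'}"
    by auto
  have lt: "(\<Sum>j'\<in>{..<length m}. (\<Sum>i \<in> {i. i < length l \<and> \<phi> i = j'}. l ! i)) < (\<Sum>j'\<in>{..<length m}. m ! j')"
  proof (rule sum_strict_mono_ex1)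
    show "finite {..<length m}" by simp
    show "\<forall>x\<in>{..<length m}. (\<Sum>i \<in> {i. i < length l \<and> \<phi> i = x}. l ! i) \<le> m ! x"
      using B by simp
    show "\<exists>a\<in>{..<length m}. (\<Sum>i \<in> {i. i < length l \<and> \<phi> i = a}. l ! i) < m ! a"
      using B C j by (meson lessThan_iff le_neq_implies_less)
  qed
  have "sum_list l = (\<Sum>i\<in>{..<length l}. l ! i)" by (simp add: sum_list_sum_nth atLeast0LessThan)
  also have "\<dots> < (\<Sum>j'\<in>{..<length m}. m ! j')" using g lt fe by simp
  also have "\<dots> = sum_list m" by (simp add: sum_list_sum_nth atLeast0LessThan)
  finally show False using s by simp
qed

lemma no_embed:
  assumes p: "is_partition \<nu>" and ne: "\<nu> \<noteq> []"
  shows "\<not> embeds (pprod [4,2,2] \<nu>) (pprod [5,3] \<nu>)"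
proof
  assume e: "embeds (pprod [4,2,2] \<nu>) (pprod [5,3] \<nu>)"
  define l where "l = pprod [4,2,2] \<nu>"
  define m where "m = pprod [5,3] \<nu>"
  have s: "sum_list l = sum_list m" unfolding l_def m_def sum_pprod by simp
  define k where "k = Min (multiplicity (2::nat) ` set \<nu>)"
  have pos: "\<forall>x\<in>set \<nu>. 0 < x" using p unfolding is_partition_def by auto
  obtain x where x: "x \<in> set \<nu>" "multiplicity 2 x = k"
  proof -
    have "k \<in> multiplicity (2::nat) ` set \<nu>"
      unfolding k_def using ne by (intro Min_in) auto
    thus ?thesis using that by auto
  qed
  have kle: "\<forall>y\<in>set \<nu>. k \<le> multiplicity 2 y" unfolding k_def by auto
  have dv: "\<forall>y\<in>set \<nu>. 2^k dvd y" using kle multiplicity_dvd' by blast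
  have ndv: "\<not> 2^(k+1) dvd 5 * x"
  proof
    assume "2^(k+1) dvd 5 * x"
    moreover have "coprime ((2::nat)^(k+1)) 5"
    proof -
      have "coprime (2::nat) 5" by simp
      thus ?thesis by simp
    qed
    ultimately have "2^(k+1) dvd x"
      using coprime_dvd_mult_right_iff by blast
    hence "k + 1 \<le> multiplicity 2 x"
      using multiplicity_geI[of x 2 "k+1"] pos x by auto
    thus False using x by simp
  qed
  have dl: "\<forall>y\<in>set l. 2^(k+1) dvd y"
    unfolding l_def set_pprod using dv by (auto simp: mult_dvd_mono)
  have "5 * x \<in> set m" unfolding m_def set_pprod using x by auto
  then obtain j where j: "j < length m" "m ! j = 5 * x" unfolding in_set_conv_nth by blast
  from e obtain \<phi> where A: "\<forall>i < length l. \<phi> i < length m"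
    and B: "\<forall>j < length m. (\<Sum>i \<in> {i. i < length l \<and> \<phi> i = j}. l ! i) \<le> m ! j"
    unfolding embeds_def l_def m_def by blast
  have eq: "(\<Sum>i \<in> {i. i < length l \<and> \<phi> i = j}. l ! i) = m ! j"
    by (rule embeds_sum_eq[OF s j(1) A B])
  have "2^(k+1) dvd (\<Sum>i \<in> {i. i < length l \<and> \<phi> i = j}. l ! i)"
    by (rule dvd_sum) (use dl in auto)
  thus False using eq j ndv by simp
qed

theorem mainTheorem6:
  shows "dom_S [4,2,2] [5,3] \<and>
    \<not> (\<exists>\<nu>. is_partition \<nu> \<and> \<nu> \<noteq> [] \<and> embeds (pprod [4,2,2] \<nu>) (pprod [5,3] \<nu>))"
proof
  show "dom_S [4,2,2] [5,3]" unfolding dom_S_def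
  proof
    fix x :: nat
    consider "x \<le> 2" | "x = 3" | "x = 4" | "x = 5" | "x > 5" by linarith
    thus "sum_list (filter (\<lambda>a. x \<le> a) [4,2,2]) \<le> sum_list (filter (\<lambda>a. x \<le> a) [5,3])"
      by cases auto
  qed
  show "\<not> (\<exists>\<nu>. is_partition \<nu> \<and> \<nu> \<noteq> [] \<and> embeds (pprod [4,2,2] \<nu>) (pprod [5,3] \<nu>))"
    using no_embed by blast
qed

end
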